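(* Let $\lambda>0$, $\xi>0$, $v_2<v_1$ with either $v_2<0<v_1$ or $0<v_2<v_1$, $q\in[0,1]$, and let $\tilde p(x,t)$ be the (generalized) density of the position $\tilde X(t)$ of the extended telegraph process driven by GCPs with parameter $\lambda$ with Poissonian resets to the origin at rate $\xi$, with $\tilde X(0)=0$ and random initial velocity $V_0$, $P\{V_0=v_1\}=q=1-P\{V_0=v_2\}$. Then for $x\in\mathbb R$, $$ \lim_{t\to+\infty}\tilde p(x,t)=q\overline H_1(x)+(1-q)\overline H_2(x)+\frac{\xi e^{\xi/\lambda}}{v_1-v_2}\Gamma\Big[0,\Big(M_x+\frac1\lambda\Big)\xi\Big]\quad\text{if } v_2<0<v_1, $$ $$ \lim_{t\to+\infty}\tilde p(x,t)=q\overline H_1(x)+(1-q)\overline H_2(x)+\mathbb 1_{\{x>0\}}\frac{\xi e^{\xi/\lambda}}{v_1-v_2}\Gamma\Big[0,\Big(\frac x{v_1}+\frac1\lambda\Big)\xi,\Big(\frac x{v_2}+\frac1\lambda\Big)\xi\Big]\quad\text{if } 0<v_2<v_1, $$ where $\overline H_j(x)=\mathrm{sgn}(v_j)\mathbb 1_{\{x/v_j>0\}}\frac{\xi e^{-\xi x/v_j}}{v_j+\lambda x}$, $j=1,2$.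
   Context: GCP with intensity $\lambda>0$: a Poisson process whose rate is random, exponentially distributed with mean $\lambda$; increments satisfy $P\{\tilde N_\lambda(t+s)-\tilde N_\lambda(t)=k\}=\frac{1}{1+\lambda s}(\frac{\lambda s}{1+\lambda s})^k$. The process: a particle starts at the origin with initial velocity $V(0)$ ($v_1,v_2\neq0$, $v_2<v_1$), moves with velocity alternating between $v_1$ and $v_2$, the periods at velocity $v_1$ and at $v_2$ being governed by two independent GCPs of intensity $\lambda$; additionally it is instantaneously reset to the origin at the epochs of an independent Poisson process of rate $\xi$, restarting afresh with its initial velocity. Conditional on $V(0)=v_j$, the density is $\tilde p(x,t|v_j)=e^{-\xi t}p(x,t|v_j)+\xi\int_0^te^{-\xi s}p(x,s|v_j)ds$, where $p(x,t|v_j)=\frac{\delta(x-v_jt)}{1+\lambda t}+\mathbb 1_{\{v_2t<x<v_1t\}}\frac{\lambda}{(v_1-v_2)(1+\lambda t)}$ ($\delta$ Dirac delta); $\tilde p(x,t)=q\tilde p(x,t|v_1)+(1-q)\tilde p(x,t|v_2)$. Notation: $M_x=\max\{x/v_1,x/v_2\}$; $\Gamma(a,z)=\int_z^\infty s^{a-1}e^{-s}ds$; $\Gamma(a,z_0,z_1)=\int_{z_0}^{z_1}s^{a-1}e^{-s}ds$. *)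

theory Defs
  imports "HOL-Analysis.Analysis"
begin

text \<open>Dirac delta evaluated pointwise (as an extended real): infinite mass density at 0,
  zero elsewhere.\<close>
definition dirac_val :: "real \<Rightarrow> ereal" where
  "dirac_val y = (if y = 0 then \<infinity> else 0)"

text \<open>Sifting property: the integral over s in [0,t] of g(s) times delta(x - v s), for v nonzero,
  equals g(x/v)/|v| when 0 < x/v < t (and 0 otherwise).\<close>
definition dirac_int :: "(real \<Rightarrow> real) \<Rightarrow> real \<Rightarrow> real \<Rightarrow> real \<Rightarrow> real" where
  "dirac_int g v x t = (if 0 < x / v \<and> x / v < t then g (x / v) / \<bar>v\<bar> else 0)"

text \<open>Absolutely continuous part of the GCP-driven telegraph density p(x,t|v_j).\<close>
definition p_reg :: "real \<Rightarrow> real \<Rightarrow> real \<Rightarrow> real \<Rightarrow> real \<Rightarrow> real" where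
  "p_reg lam v1 v2 x t =
     (if v2 * t < x \<and> x < v1 * t then lam / ((v1 - v2) * (1 + lam * t)) else 0)"

text \<open>Density of the process with resets, conditional on V(0) = v (v = v1 or v2):
  e^{-xi t} p(x,t|v) + xi * int_0^t e^{-xi s} p(x,s|v) ds,
  where p(x,t|v) = delta(x - v t)/(1 + lam t) + p_reg.\<close>
definition tp_cond :: "real \<Rightarrow> real \<Rightarrow> real \<Rightarrow> real \<Rightarrow> real \<Rightarrow> real \<Rightarrow> real \<Rightarrow> ereal" where
  "tp_cond lam xi v1 v2 v x t =
     ereal (exp (- xi * t) / (1 + lam * t)) * dirac_val (x - v * t)
     + ereal (exp (- xi * t) * p_reg lam v1 v2 x t
       + xi * dirac_int (\<lambda>s. exp (- xi * s) / (1 + lam * s)) v x t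
       + xi * interval_lebesgue_integral lborel (ereal 0) (ereal t)
                (\<lambda>s. exp (- xi * s) * p_reg lam v1 v2 x s))"

definition tp :: "real \<Rightarrow> real \<Rightarrow> real \<Rightarrow> real \<Rightarrow> real \<Rightarrow> real \<Rightarrow> real \<Rightarrow> ereal" where
  "tp lam xi v1 v2 q x t =
     ereal q * tp_cond lam xi v1 v2 v1 x t + ereal (1 - q) * tp_cond lam xi v1 v2 v2 x t"

definition upper_inc_gamma :: "real \<Rightarrow> real \<Rightarrow> real" where
  "upper_inc_gamma a z = interval_lebesgue_integral lborel (ereal z) PInfty
      (\<lambda>s. s powr (a - 1) * exp (- s))"

definition gen_inc_gamma :: "real \<Rightarrow> real \<Rightarrow> real \<Rightarrow> real" where
  "gen_inc_gamma a z0 z1 = interval_lebesgue_integral lborel (ereal z0) (ereal z1)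
      (\<lambda>s. s powr (a - 1) * exp (- s))"

definition Hbar :: "real \<Rightarrow> real \<Rightarrow> real \<Rightarrow> real \<Rightarrow> real" where
  "Hbar lam xi v x = sgn v * (if x / v > 0 then 1 else 0) * (xi * exp (- xi * x / v) / (v + lam * x))"

definition Mx :: "real \<Rightarrow> real \<Rightarrow> real \<Rightarrow> real" where
  "Mx v1 v2 x = max (x / v1) (x / v2)"

end

theory Submission imports Defs "HOL-Probability.Sinc_Integral" "HOL-Real_Asymp.Real_Asymp" begin

lemma subst_lem:
  fixes lam xi v1 v2 a b :: real
  assumes v: "v2 < v1" and lam: "lam > 0" and xi: "xi > 0" and ab: "0 \<le> a" "a \<le> b"
  shows "xi * (LBINT s=a..b. exp (- xi * s) * (lam / ((v1 - v2) * (1 + lam * s))))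
     = xi * exp (xi / lam) / (v1 - v2) *
       (LBINT u=(a + 1/lam) * xi..(b + 1/lam) * xi. u powr (0 - 1) * exp (- u))"
proof -
  let ?g = "\<lambda>s. (s + 1/lam) * xi"
  let ?f = "\<lambda>u::real. u powr (0 - 1) * exp (- u)"
  have pos: "\<And>s. s \<in> {a..b} \<Longrightarrow> ?g s > 0" using lam xi ab
    by (auto intro!: mult_pos_pos add_nonneg_pos)
  have sub: "(LBINT s=a..b. xi *\<^sub>R ?f (?g s)) = (LBINT u=?g a..?g b. ?f u)"
  proof (rule interval_integral_substitution_finite[OF ab(2)])
    show "(?g has_real_derivative xi) (at x within {a..b})" for x
      by (auto intro!: derivative_eq_intros)
    show "continuous_on (?g ` {a..b}) ?f"
      apply (intro continuous_intros)
      using pos by (force simp: image_iff)+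
    show "continuous_on {a..b} (\<lambda>x. xi)" by simp
  qed
  have pt: "xi * (exp (- xi * s) * (lam / ((v1 - v2) * (1 + lam * s))))
      = xi * exp (xi / lam) / (v1 - v2) * (xi *\<^sub>R ?f (?g s))" if "s \<in> {a..b}" for s
  proof -
    have gs: "?g s > 0" using pos that by blast
    have s0: "1 + lam * s > 0" using lam that ab by (simp add: add_pos_nonneg)
    have e: "exp (- ((s + 1/lam) * xi)) = exp (- xi * s) / exp (xi / lam)"
      by (simp add: exp_diff[symmetric] algebra_simps)
    have g: "(s + 1/lam) * xi = (1 + lam * s) * xi / lam" using lam by (simp add: field_simps)
    have alg0: "\<And>E F w c. E > 0 \<Longrightarrow> w > 0 \<Longrightarrow> c > 0 \<Longrightarrow> xi * (F * (lam / (w * c)))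
      = xi * E / w * (xi * (1 / (c * xi / lam) * (F / E)))"
      using lam xi by (simp add: field_simps)
    have alg: "\<And>E F. E > 0 \<Longrightarrow> xi * (F * (lam / ((v1 - v2) * (1 + lam * s))))
      = xi * E / (v1 - v2) * (xi * (1 / ((1 + lam * s) * xi / lam) * (F / E)))"
      using s0 v by (intro alg0) auto
    have pw: "?g s powr (0 - 1) = 1 / ((1 + lam * s) * xi / lam)"
      using gs s0 lam xi by (simp add: g abs_of_pos)
    have fg: "?f (?g s) = 1 / ((1 + lam * s) * xi / lam) * (exp (- xi * s) / exp (xi / lam))"
      by (simp only: pw e)
    show ?thesis
      by (simp only: real_scaleR_def fg, rule alg) simp
  qed
  have "xi * (LBINT s=a..b. exp (- xi * s) * (lam / ((v1 - v2) * (1 + lam * s))))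
      = (LBINT s=a..b. xi * (exp (- xi * s) * (lam / ((v1 - v2) * (1 + lam * s)))))"
    by (rule interval_lebesgue_integral_mult_right[symmetric])
  also have "\<dots> = (LBINT s=a..b. xi * exp (xi / lam) / (v1 - v2) * (xi *\<^sub>R ?f (?g s)))"
    using ab by (intro interval_integral_cong pt) (auto simp: einterval_iff)
  also have "\<dots> = xi * exp (xi / lam) / (v1 - v2) * (LBINT s=a..b. xi *\<^sub>R ?f (?g s))"
    by (rule interval_lebesgue_integral_mult_right)
  also have "\<dots> = xi * exp (xi / lam) / (v1 - v2) * (LBINT u=?g a..?g b. ?f u)"
    by (simp only: sub)
  finally show ?thesis .
qed
lemma tail_lim:
  fixes A :: real
  assumes A: "A > 0"
  shows "((\<lambda>B. LBINT u=ereal A..ereal B. u powr (0 - 1) * exp (- u)) \<longlongrightarrow>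
            (LBINT u=ereal A..\<infinity>. u powr (0 - 1) * exp (- u))) at_top"
proof -
  let ?f = "\<lambda>u::real. u powr (0 - 1) * exp (- u)"
  have i0: "set_integrable lborel {A..} (\<lambda>x. exp (- (x * 1)))"
    using A by (intro set_integrable_subset[OF integrable_I0i_exp_mscale[of 1]]) auto
  have i1: "set_integrable lborel {A..} (\<lambda>x. (1 / A) * exp (- (x * 1)))"
    using i0 by (rule set_integrable_mult_right)
  have int: "set_integrable lborel {A..} ?f"
  proof (rule set_integrable_bound[OF i1])
    show "set_borel_measurable lborel {A..} ?f"
      unfolding set_borel_measurable_def by measurable
    show "AE x in lborel. x \<in> {A..} \<longrightarrow> norm (?f x) \<le> norm ((1 / A) * exp (- (x * 1)))"
    proof (rule AE_I2, rule impI)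
      fix x assume "x \<in> {A..}"
      then have x: "x \<ge> A" by simp
      then have "1 / x \<le> 1 / A" using A by (simp add: frac_le)
      then show "norm (?f x) \<le> norm ((1 / A) * exp (- (x * 1)))"
        using x A by (simp add: abs_of_pos divide_left_mono)
    qed
  qed
  have lim: "((\<lambda>b. set_lebesgue_integral lborel {A..b} ?f) \<longlongrightarrow> set_lebesgue_integral lborel {A..} ?f) at_top"
    by (rule tendsto_set_lebesgue_integral_at_top[OF _ int]) auto
  have e1: "set_lebesgue_integral lborel {A..} ?f = (LBINT u=ereal A..\<infinity>. ?f u)"
    unfolding interval_integral_to_infinity_eq
    by (rule set_integral_discrete_difference[where X="{A}"]) auto
  have ev: "eventually (\<lambda>b. set_lebesgue_integral lborel {A..b} ?f = (LBINT u=ereal A..ereal b. ?f u)) at_top"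
    using eventually_ge_at_top[of A] by eventually_elim (simp add: interval_integral_Icc)
  show ?thesis
    using tendsto_cong[OF ev] lim e1 by simp
qed
lemma red1:
  fixes lam xi v1 v2 x t :: real
  assumes v: "v2 < 0" "0 < v1" and Mt: "Mx v1 v2 x \<le> t"
  shows "(LBINT s=ereal 0..ereal t. exp (- xi * s) * p_reg lam v1 v2 x s)
       = (LBINT s=ereal (Mx v1 v2 x)..ereal t. exp (- xi * s) * (lam / ((v1 - v2) * (1 + lam * s))))"
proof -
  let ?M = "Mx v1 v2 x"
  have M0: "0 \<le> ?M"
  proof (cases "x \<ge> 0")
    case True then show ?thesis using v unfolding Mx_def by (simp add: max.coboundedI1)
  next
    case False then have "0 \<le> x / v2" using v by (simp add: divide_nonpos_neg)
    then show ?thesis unfolding Mx_def by (simp add: max.coboundedI2)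
  qed
  have t0: "0 \<le> t" using M0 Mt by linarith
  have cond: "(v2 * s < x \<and> x < v1 * s) \<longleftrightarrow> ?M < s" if "0 < s" for s
  proof -
    have a: "x / v1 < s \<longleftrightarrow> x < v1 * s" using v by (simp add: pos_divide_less_eq mult.commute)
    have b: "x / v2 < s \<longleftrightarrow> v2 * s < x" using v by (simp add: neg_divide_less_eq mult.commute)
    show ?thesis unfolding Mx_def using a b by auto
  qed
  have pt: "indicator {0<..<t} s *\<^sub>R (exp (- xi * s) * p_reg lam v1 v2 x s)
     = indicator {?M<..<t} s *\<^sub>R (exp (- xi * s) * (lam / ((v1 - v2) * (1 + lam * s))))" for s
  proof (cases "0 < s")
    case True then show ?thesis using cond[OF True] unfolding p_reg_def
      by (auto split: split_indicator)
  next
    case False then show ?thesis using M0 by (auto split: split_indicator)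
  qed
  show ?thesis using t0 Mt
    unfolding interval_lebesgue_integral_def set_lebesgue_integral_def
    by (simp only: if_True ereal_less_eq(3) einterval_eq pt)
qed

lemma red2:
  fixes lam xi v1 v2 x t :: real
  assumes v: "0 < v2" "v2 < v1" and x: "0 < x" and t: "x / v2 \<le> t"
  shows "(LBINT s=ereal 0..ereal t. exp (- xi * s) * p_reg lam v1 v2 x s)
       = (LBINT s=ereal (x / v1)..ereal (x / v2). exp (- xi * s) * (lam / ((v1 - v2) * (1 + lam * s))))"
proof -
  have le: "x / v1 \<le> x / v2" using v x by (simp add: frac_le)
  have p1: "0 < x / v1" using v x by simp
  have t0: "0 \<le> t" using t v x by (meson less_le_trans less_imp_le p1 le)
  have cond: "(v2 * s < x \<and> x < v1 * s) \<longleftrightarrow> x / v1 < s \<and> s < x / v2" for s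
  proof -
    have a: "x / v1 < s \<longleftrightarrow> x < v1 * s" using v by (simp add: pos_divide_less_eq mult.commute)
    have b: "s < x / v2 \<longleftrightarrow> v2 * s < x" using v by (simp add: pos_less_divide_eq mult.commute)
    show ?thesis using a b by auto
  qed
  have pt: "indicator {0<..<t} s *\<^sub>R (exp (- xi * s) * p_reg lam v1 v2 x s)
     = indicator {x/v1<..<x/v2} s *\<^sub>R (exp (- xi * s) * (lam / ((v1 - v2) * (1 + lam * s))))" for s
    using cond[of s] p1 t unfolding p_reg_def
    by (auto split: split_indicator)
  show ?thesis using t0 le
    unfolding interval_lebesgue_integral_def set_lebesgue_integral_def
    by (simp only: if_True ereal_less_eq(3) einterval_eq pt)
qed

lemma red3:
  fixes lam xi v1 v2 x t :: real
  assumes v: "0 < v2" "v2 < v1" and x: "x \<le> 0" and t: "0 \<le> t"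
  shows "(LBINT s=ereal 0..ereal t. exp (- xi * s) * p_reg lam v1 v2 x s) = 0"
proof -
  have "indicator {0<..<t} s *\<^sub>R (exp (- xi * s) * p_reg lam v1 v2 x s) = (0::real)" for s
  proof (cases "0 < s")
    case True then have "0 < v2 * s" using v by simp
    then show ?thesis using x unfolding p_reg_def by (auto split: split_indicator)
  qed (auto split: split_indicator)
  then show ?thesis using t
    unfolding interval_lebesgue_integral_def set_lebesgue_integral_def
    by (simp only: if_True ereal_less_eq(3) einterval_eq integral_zero)
qed

lemma aux_sgn:
  fixes E a v :: real
  assumes "v \<noteq> 0"
  shows "E / (a / v) / \<bar>v\<bar> = sgn v * (E / a)"
proof (cases "v > 0")
  case True then show ?thesis by simp
next
  case False then have "v < 0" using assms by simp
  then show ?thesis by simp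
qed

lemma dirac_ev:
  fixes lam xi v x :: real
  assumes v: "v \<noteq> 0" and lam: "lam > 0"
  shows "eventually (\<lambda>t. xi * dirac_int (\<lambda>s. exp (- xi * s) / (1 + lam * s)) v x t = Hbar lam xi v x) at_top"
  using eventually_gt_at_top[of "x / v"]
proof eventually_elim
  case (elim t)
  show ?case
  proof (cases "0 < x / v")
    case False then show ?thesis using elim unfolding dirac_int_def Hbar_def by auto
  next
    case True
    have r: "1 + lam * (x / v) = (v + lam * x) / v" using v by (simp add: field_simps)
    have e: "exp (- xi * (x / v)) = exp (- xi * x / v)" by simp
    show ?thesis using elim True unfolding dirac_int_def Hbar_def
      by (simp only: if_True r e aux_sgn[OF v] conj_absorb) simp
  qed
qed
lemma Mx_nonneg:
  assumes v: "v2 < 0" "0 < v1"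
  shows "0 \<le> Mx v1 v2 x"
proof (cases "x \<ge> 0")
  case True then show ?thesis using v unfolding Mx_def by (simp add: max.coboundedI1)
next
  case False then have "0 \<le> x / v2" using v by (simp add: divide_nonpos_neg)
  then show ?thesis unfolding Mx_def by (simp add: max.coboundedI2)
qed

lemma main_gen:
  fixes lam xi v1 v2 q x L :: real
  assumes v1: "v1 \<noteq> 0" and v2: "v2 \<noteq> 0" and lam: "lam > 0" and xi: "xi > 0" and v: "v2 < v1"
    and hI: "((\<lambda>t. xi * (LBINT s=ereal 0..ereal t. exp (- xi * s) * p_reg lam v1 v2 x s)) \<longlongrightarrow> L) at_top"
  shows "((\<lambda>t. tp lam xi v1 v2 q x t) \<longlongrightarrow>
          ereal (q * Hbar lam xi v1 x + (1 - q) * Hbar lam xi v2 x + L)) at_top"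
proof -
  define I where "I t = (LBINT s=ereal 0..ereal t. exp (- xi * s) * p_reg lam v1 v2 x s)" for t
  have ex: "((\<lambda>t. exp (- xi * t)) \<longlongrightarrow> 0) at_top" using xi by real_asymp
  have z: "((\<lambda>t. exp (- xi * t) * p_reg lam v1 v2 x t) \<longlongrightarrow> 0) at_top"
  proof (rule Lim_null_comparison)
    show "eventually (\<lambda>t. norm (exp (- xi * t) * p_reg lam v1 v2 x t) \<le> exp (- xi * t) * (lam / (v1 - v2))) at_top"
      using eventually_ge_at_top[of 0]
    proof eventually_elim
      case (elim t)
      have "1 \<le> 1 + lam * t" using lam elim by simp
      then have "lam / ((v1 - v2) * (1 + lam * t)) \<le> lam / (v1 - v2)"
        using lam v by (simp add: divide_left_mono_neg frac_le)
      moreover have "0 \<le> lam / ((v1 - v2) * (1 + lam * t))"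
        using lam v elim by (simp add: add_nonneg_nonneg)
      ultimately have pb: "\<bar>p_reg lam v1 v2 x t\<bar> \<le> lam / (v1 - v2)"
        using lam v unfolding p_reg_def by auto
      show ?case using mult_left_mono[OF pb, of "exp (- xi * t)"] by (simp add: abs_mult)
    qed
    show "((\<lambda>t. exp (- xi * t) * (lam / (v1 - v2))) \<longlongrightarrow> 0) at_top"
      using tendsto_mult_left_zero[OF ex, of "lam / (v1 - v2)"] by (simp only:)
  qed
  let ?R = "\<lambda>t. q * (exp (- xi * t) * p_reg lam v1 v2 x t + Hbar lam xi v1 x + xi * I t)
      + (1 - q) * (exp (- xi * t) * p_reg lam v1 v2 x t + Hbar lam xi v2 x + xi * I t)"
  have ev: "eventually (\<lambda>t. tp lam xi v1 v2 q x t = ereal (?R t)) at_top"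
    using dirac_ev[OF v1 lam, of xi x] dirac_ev[OF v2 lam, of xi x]
      eventually_gt_at_top[of "x / v1"] eventually_gt_at_top[of "x / v2"]
  proof eventually_elim
    case (elim t)
    have d1: "dirac_val (x - v1 * t) = 0"
      using elim(3) v1 unfolding dirac_val_def by (auto simp: field_simps)
    have d2: "dirac_val (x - v2 * t) = 0"
      using elim(4) v2 unfolding dirac_val_def by (auto simp: field_simps)
    show ?case unfolding tp_def tp_cond_def d1 d2 elim(1) elim(2) I_def[symmetric]
      by simp
  qed
  have "(?R \<longlongrightarrow> q * (0 + Hbar lam xi v1 x + L) + (1 - q) * (0 + Hbar lam xi v2 x + L)) at_top"
    using hI unfolding I_def[symmetric] by (intro tendsto_intros z)
  moreover have "q * (0 + Hbar lam xi v1 x + L) + (1 - q) * (0 + Hbar lam xi v2 x + L)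
      = q * Hbar lam xi v1 x + (1 - q) * Hbar lam xi v2 x + L" by algebra
  ultimately have "(?R \<longlongrightarrow> q * Hbar lam xi v1 x + (1 - q) * Hbar lam xi v2 x + L) at_top" by simp
  then have "((\<lambda>t. ereal (?R t)) \<longlongrightarrow> ereal (q * Hbar lam xi v1 x + (1 - q) * Hbar lam xi v2 x + L)) at_top"
    by (rule tendsto_ereal)
  then show ?thesis using tendsto_cong[OF ev] by simp
qed

lemma case1:
  fixes lam xi v1 v2 x :: real
  assumes v: "v2 < 0" "0 < v1" and lam: "lam > 0" and xi: "xi > 0"
  shows "((\<lambda>t. xi * (LBINT s=ereal 0..ereal t. exp (- xi * s) * p_reg lam v1 v2 x s)) \<longlongrightarrow>
     xi * exp (xi / lam) / (v1 - v2) * upper_inc_gamma 0 ((Mx v1 v2 x + 1 / lam) * xi)) at_top"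
proof -
  let ?M = "Mx v1 v2 x"
  let ?A = "(?M + 1 / lam) * xi"
  let ?c = "xi * exp (xi / lam) / (v1 - v2)"
  let ?f = "\<lambda>u::real. u powr (0 - 1) * exp (- u)"
  have M0: "0 \<le> ?M" using Mx_nonneg[OF v] .
  have A0: "?A > 0" using M0 lam xi by (simp add: add_nonneg_pos)
  have ev: "eventually (\<lambda>t. xi * (LBINT s=ereal 0..ereal t. exp (- xi * s) * p_reg lam v1 v2 x s)
      = ?c * (LBINT u=ereal ?A..ereal ((t + 1/lam) * xi). ?f u)) at_top"
    using eventually_ge_at_top[of ?M]
  proof eventually_elim
    case (elim t)
    show ?case using red1[OF v elim, of xi lam] subst_lem[of v2 v1 lam xi ?M t] v lam xi M0 elim
      by simp
  qed
  have g: "filterlim (\<lambda>t. (t + 1/lam) * xi) at_top at_top" using xi by real_asymp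
  have "((\<lambda>t. LBINT u=ereal ?A..ereal ((t + 1/lam) * xi). ?f u) \<longlongrightarrow> (LBINT u=ereal ?A..\<infinity>. ?f u)) at_top"
    using filterlim_compose[OF tail_lim[OF A0] g] .
  then have "((\<lambda>t. ?c * (LBINT u=ereal ?A..ereal ((t + 1/lam) * xi). ?f u)) \<longlongrightarrow> ?c * (LBINT u=ereal ?A..\<infinity>. ?f u)) at_top"
    by (rule tendsto_mult_left)
  then show ?thesis using tendsto_cong[OF ev] unfolding upper_inc_gamma_def
    by simp
qed

lemma case2:
  fixes lam xi v1 v2 x :: real
  assumes v: "0 < v2" "v2 < v1" and lam: "lam > 0" and xi: "xi > 0"
  shows "((\<lambda>t. xi * (LBINT s=ereal 0..ereal t. exp (- xi * s) * p_reg lam v1 v2 x s)) \<longlongrightarrow>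
     (if x > 0 then 1 else 0) * xi * exp (xi / lam) / (v1 - v2)
                  * gen_inc_gamma 0 ((x / v1 + 1 / lam) * xi) ((x / v2 + 1 / lam) * xi)) at_top"
proof (cases "x > 0")
  case True
  have le: "x / v1 \<le> x / v2" using v True by (simp add: frac_le)
  have p1: "0 \<le> x / v1" using v True by simp
  have "eventually (\<lambda>t. xi * (LBINT s=ereal 0..ereal t. exp (- xi * s) * p_reg lam v1 v2 x s) =
     (if x > 0 then 1 else 0) * xi * exp (xi / lam) / (v1 - v2)
                  * gen_inc_gamma 0 ((x / v1 + 1 / lam) * xi) ((x / v2 + 1 / lam) * xi)) at_top"
    using eventually_ge_at_top[of "x / v2"]
  proof eventually_elim
    case (elim t)
    show ?case using red2[OF v True elim, of xi lam] subst_lem[of v2 v1 lam xi "x/v1" "x/v2"]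
        v lam xi le p1 True unfolding gen_inc_gamma_def
      by simp
  qed
  then show ?thesis by (rule tendsto_eventually)
next
  case False
  have "eventually (\<lambda>t. xi * (LBINT s=ereal 0..ereal t. exp (- xi * s) * p_reg lam v1 v2 x s) =
     (if x > 0 then 1 else 0) * xi * exp (xi / lam) / (v1 - v2)
                  * gen_inc_gamma 0 ((x / v1 + 1 / lam) * xi) ((x / v2 + 1 / lam) * xi)) at_top"
    using eventually_ge_at_top[of 0]
  proof eventually_elim
    case (elim t)
    show ?case using red3[OF v _ elim, of x xi lam] False by simp
  qed
  then show ?thesis by (rule tendsto_eventually)
qed

theorem corollary5:
  fixes lam xi v1 v2 q x :: real
  assumes "lam > 0" and "xi > 0" and "v2 < v1"
    and "v2 < 0 \<and> 0 < v1 \<or> 0 < v2 \<and> v2 < v1"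
    and "0 \<le> q" and "q \<le> 1"
  shows "(v2 < 0 \<and> 0 < v1 \<longrightarrow>
           ((\<lambda>t. tp lam xi v1 v2 q x t) \<longlongrightarrow>
              ereal (q * Hbar lam xi v1 x + (1 - q) * Hbar lam xi v2 x
                + xi * exp (xi / lam) / (v1 - v2)
                  * upper_inc_gamma 0 ((Mx v1 v2 x + 1 / lam) * xi))) at_top)
       \<and> (0 < v2 \<and> v2 < v1 \<longrightarrow>
           ((\<lambda>t. tp lam xi v1 v2 q x t) \<longlongrightarrow>
              ereal (q * Hbar lam xi v1 x + (1 - q) * Hbar lam xi v2 x
                + (if x > 0 then 1 else 0) * xi * exp (xi / lam) / (v1 - v2)
                  * gen_inc_gamma 0 ((x / v1 + 1 / lam) * xi) ((x / v2 + 1 / lam) * xi))) at_top)"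
proof (intro conjI impI)
  assume h: "v2 < 0 \<and> 0 < v1"
  show "((\<lambda>t. tp lam xi v1 v2 q x t) \<longlongrightarrow>
              ereal (q * Hbar lam xi v1 x + (1 - q) * Hbar lam xi v2 x
                + xi * exp (xi / lam) / (v1 - v2)
                  * upper_inc_gamma 0 ((Mx v1 v2 x + 1 / lam) * xi))) at_top"
    using h assms by (intro main_gen case1) auto
next
  assume h: "0 < v2 \<and> v2 < v1"
  show "((\<lambda>t. tp lam xi v1 v2 q x t) \<longlongrightarrow>
              ereal (q * Hbar lam xi v1 x + (1 - q) * Hbar lam xi v2 x
                + (if x > 0 then 1 else 0) * xi * exp (xi / lam) / (v1 - v2)
                  * gen_inc_gamma 0 ((x / v1 + 1 / lam) * xi) ((x / v2 + 1 / lam) * xi))) at_top"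
    using h assms by (intro main_gen case2) auto
qed

end
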